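(* Let $S=(X,X_0,X_S,U,\rightarrow,Y,H)$ be a metric system with metric $\mathbf{d}$ on $Y$, let $\delta\geq 0$, and let $S_I=(X_I,X_{I0},U,\rightarrow_I)$ be its $\delta$-approximate initial-state estimator. Then for every $(x_0,q_0)\in X_{I0}$ and every finite run $(x_0,q_0)\xrightarrow{u_1}_I (x_1,q_1)\xrightarrow{u_2}_I\cdots\xrightarrow{u_n}_I (x_n,q_n)$ of $S_I$ we have: (i) $x_n\xrightarrow{u_n}x_{n-1}\xrightarrow{u_{n-1}}\cdots\xrightarrow{u_1}x_0$ is a sequence of transitions of $S$; and (ii) $q_n=\{x_0'\in X:\ \exists\, x_0'\xrightarrow{u_n'}x_1'\xrightarrow{u_{n-1}'}\cdots\xrightarrow{u_1'}x_n' \text{ in } S \text{ (for some inputs } u_i'\in U) \text{ with } \max_{i\in\{0,\dots,n\}}\mathbf{d}(H(x_i),H(x_{n-i}'))\leq\delta\}$.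
   Context: A system is a tuple $S=(X,X_0,X_S,U,\rightarrow,Y,H)$ where $X$ is a (possibly infinite) set of states, $X_0\subseteq X$ the initial states, $X_S\subseteq X$ the secret states, $U$ a set of inputs, $\rightarrow\subseteq X\times U\times X$ a transition relation (write $x\xrightarrow{u}x'$ for $(x,u,x')\in\rightarrow$), $Y$ a set of outputs and $H:X\to Y$ an output map. It is metric if $Y$ carries a metric $\mathbf{d}$. For $x\in X$, $u\in U$, $\mathbf{Pre}_u(x)=\{x'': x''\xrightarrow{u}x\}$, and for $q\subseteq X$, $\mathbf{Pre}_u(q)=\bigcup_{x\in q}\mathbf{Pre}_u(x)$. The $\delta$-approximate initial-state estimator of $S$ is $S_I=(X_I,X_{I0},U,\rightarrow_I)$ with $X_{I0}=\{(x,q)\in X\times 2^X: q=\{x'\in X:\mathbf{d}(H(x),H(x'))\leq\delta\}\}$, and for $(x,q),(x',q')\in X\times 2^X$, $u\in U$: $(x,q)\xrightarrow{u}_I(x',q')$ iff $(x',u,x)\in\rightarrow$ and $q'=\bigcup_{\hat u\in U}\mathbf{Pre}_{\hat u}(q)\cap\{x''\in X:\mathbf{d}(H(x'),H(x''))\leq\delta\}$. $X_I\subseteq X\times 2^X$ is the set of states reachable from $X_{I0}$. *)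

theory Defs
  imports "HOL-Analysis.Analysis"
begin

text \<open>A system S = (X, X0, XS, U, T, Y, H). The output set Y is the type 'y;
  it is metric when 'y is of class metric_space (metric d = dist).
  A transition x --u--> x' is (x, u, x') in T.\<close>

definition is_system ::
  "'x set \<Rightarrow> 'x set \<Rightarrow> 'x set \<Rightarrow> 'u set \<Rightarrow> ('x \<times> 'u \<times> 'x) set \<Rightarrow> ('x \<Rightarrow> 'y) \<Rightarrow> bool" where
  "is_system X X0 XS U T H \<longleftrightarrow> X0 \<subseteq> X \<and> XS \<subseteq> X \<and> T \<subseteq> X \<times> U \<times> X"

definition Pre_state :: "('x \<times> 'u \<times> 'x) set \<Rightarrow> 'u \<Rightarrow> 'x \<Rightarrow> 'x set" where
  "Pre_state T u x = {x''. (x'', u, x) \<in> T}"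

definition Pre_set :: "('x \<times> 'u \<times> 'x) set \<Rightarrow> 'u \<Rightarrow> 'x set \<Rightarrow> 'x set" where
  "Pre_set T u q = (\<Union>x\<in>q. Pre_state T u x)"

definition est_init ::
  "'x set \<Rightarrow> ('x \<Rightarrow> 'y::metric_space) \<Rightarrow> real \<Rightarrow> ('x \<times> 'x set) set" where
  "est_init X H \<delta> = {(x, q). x \<in> X \<and> q = {x' \<in> X. dist (H x) (H x') \<le> \<delta>}}"

definition est_trans ::
  "'x set \<Rightarrow> 'u set \<Rightarrow> ('x \<times> 'u \<times> 'x) set \<Rightarrow> ('x \<Rightarrow> 'y::metric_space) \<Rightarrow> real
   \<Rightarrow> ('x \<times> 'x set) \<Rightarrow> 'u \<Rightarrow> ('x \<times> 'x set) \<Rightarrow> bool" where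
  "est_trans X U T H \<delta> s u s' \<longleftrightarrow>
     (case s of (x, q) \<Rightarrow> case s' of (x', q') \<Rightarrow>
        x \<in> X \<and> q \<subseteq> X \<and> x' \<in> X \<and> q' \<subseteq> X \<and>
        (x', u, x) \<in> T \<and>
        q' = (\<Union>uh\<in>U. Pre_set T uh q) \<inter> {x'' \<in> X. dist (H x') (H x'') \<le> \<delta>})"

inductive_set est_reach ::
  "'x set \<Rightarrow> 'u set \<Rightarrow> ('x \<times> 'u \<times> 'x) set \<Rightarrow> ('x \<Rightarrow> 'y::metric_space) \<Rightarrow> real
   \<Rightarrow> ('x \<times> 'x set) set" for X U T H \<delta> where
  init: "s \<in> est_init X H \<delta> \<Longrightarrow> s \<in> est_reach X U T H \<delta>"
| step: "s \<in> est_reach X U T H \<delta> \<Longrightarrow> u \<in> U \<Longrightarrow> est_trans X U T H \<delta> s u s'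
         \<Longrightarrow> s' \<in> est_reach X U T H \<delta>"

end

theory Submission
  imports Defs
begin

lemma est_set_char:
  fixes X :: "'x set" and U :: "'u set" and T :: "('x \<times> 'u \<times> 'x) set"
    and H :: "'x \<Rightarrow> 'y::metric_space" and xs :: "nat \<Rightarrow> 'x" and qs :: "nat \<Rightarrow> 'x set" and us :: "nat \<Rightarrow> 'u"
  assumes TX: "T \<subseteq> X \<times> U \<times> X"
    and start: "(xs 0, qs 0) \<in> est_init X H \<delta>"
    and run: "\<forall>i<n. est_trans X U T H \<delta> (xs i, qs i) (us (Suc i)) (xs (Suc i), qs (Suc i))"
  shows "k \<le> n \<Longrightarrow> qs k = {x0' \<in> X. \<exists>xs' :: nat \<Rightarrow> 'x. \<exists>us' :: nat \<Rightarrow> 'u.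
                    xs' 0 = x0'
                  \<and> (\<forall>i<k. us' (k - i) \<in> U \<and> (xs' i, us' (k - i), xs' (Suc i)) \<in> T)
                  \<and> (\<forall>i\<le>k. dist (H (xs i)) (H (xs' (k - i))) \<le> \<delta>)}"
proof (induction k)
  case 0
  then show ?case using start by (auto simp: est_init_def)
next
  case (Suc k)
  have IH: "qs k = {x0' \<in> X. \<exists>xs' :: nat \<Rightarrow> 'x. \<exists>us' :: nat \<Rightarrow> 'u.
                    xs' 0 = x0'
                  \<and> (\<forall>i<k. us' (k - i) \<in> U \<and> (xs' i, us' (k - i), xs' (Suc i)) \<in> T)
                  \<and> (\<forall>i\<le>k. dist (H (xs i)) (H (xs' (k - i))) \<le> \<delta>)}"
    using Suc by simp
  have tr: "est_trans X U T H \<delta> (xs k, qs k) (us (Suc k)) (xs (Suc k), qs (Suc k))"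
    using run Suc.prems by simp
  hence q: "qs (Suc k) = (\<Union>uh\<in>U. Pre_set T uh (qs k)) \<inter> {x'' \<in> X. dist (H (xs (Suc k))) (H x'') \<le> \<delta>}"
    by (simp add: est_trans_def)
  show ?case
  proof (intro set_eqI iffI)
    fix y assume "y \<in> qs (Suc k)"
    then obtain uh z where y: "y \<in> X" "uh \<in> U" "z \<in> qs k" "(y, uh, z) \<in> T"
      "dist (H (xs (Suc k))) (H y) \<le> \<delta>"
      unfolding q by (auto simp: Pre_set_def Pre_state_def)
    then obtain zs vs where z: "zs 0 = z"
      "\<forall>i<k. vs (k - i) \<in> U \<and> (zs i, vs (k - i), zs (Suc i)) \<in> T"
      "\<forall>i\<le>k. dist (H (xs i)) (H (zs (k - i))) \<le> \<delta>"
      using IH by auto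
    define zs' where "zs' = (\<lambda>j. case j of 0 \<Rightarrow> y | Suc j' \<Rightarrow> zs j')"
    define vs' where "vs' = vs(Suc k := uh)"
    have A: "\<forall>i<Suc k. vs' (Suc k - i) \<in> U \<and> (zs' i, vs' (Suc k - i), zs' (Suc i)) \<in> T"
    proof (intro allI impI)
      fix i assume i: "i < Suc k"
      show "vs' (Suc k - i) \<in> U \<and> (zs' i, vs' (Suc k - i), zs' (Suc i)) \<in> T"
      proof (cases i)
        case 0 thus ?thesis using y z by (simp add: zs'_def vs'_def)
      next
        case (Suc j)
        hence "j < k" using i by simp
        thus ?thesis using z Suc by (auto simp: zs'_def vs'_def)
      qed
    qed
    have B: "\<forall>i\<le>Suc k. dist (H (xs i)) (H (zs' (Suc k - i))) \<le> \<delta>"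
    proof (intro allI impI)
      fix i assume i: "i \<le> Suc k"
      show "dist (H (xs i)) (H (zs' (Suc k - i))) \<le> \<delta>"
      proof (cases "i = Suc k")
        case True thus ?thesis using y by (simp add: zs'_def)
      next
        case False
        hence "i \<le> k" using i by simp
        hence "Suc k - i = Suc (k - i)" by simp
        thus ?thesis using z \<open>i \<le> k\<close> by (simp add: zs'_def)
      qed
    qed
    show "y \<in> {x0' \<in> X. \<exists>xs' :: nat \<Rightarrow> 'x. \<exists>us' :: nat \<Rightarrow> 'u.
                    xs' 0 = x0'
                  \<and> (\<forall>i<Suc k. us' (Suc k - i) \<in> U \<and> (xs' i, us' (Suc k - i), xs' (Suc i)) \<in> T)
                  \<and> (\<forall>i\<le>Suc k. dist (H (xs i)) (H (xs' (Suc k - i))) \<le> \<delta>)}"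
      using A B y(1) by (intro CollectI conjI exI[of _ zs'] exI[of _ vs']) (auto simp: zs'_def)
  next
    fix y assume "y \<in> {x0' \<in> X. \<exists>xs' :: nat \<Rightarrow> 'x. \<exists>us' :: nat \<Rightarrow> 'u.
                    xs' 0 = x0'
                  \<and> (\<forall>i<Suc k. us' (Suc k - i) \<in> U \<and> (xs' i, us' (Suc k - i), xs' (Suc i)) \<in> T)
                  \<and> (\<forall>i\<le>Suc k. dist (H (xs i)) (H (xs' (Suc k - i))) \<le> \<delta>)}"
    then obtain zs vs where y: "y \<in> X" "zs 0 = y"
      and P: "\<forall>i<Suc k. vs (Suc k - i) \<in> U \<and> (zs i, vs (Suc k - i), zs (Suc i)) \<in> T"
      and D: "\<forall>i\<le>Suc k. dist (H (xs i)) (H (zs (Suc k - i))) \<le> \<delta>" by blast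
    have P0: "vs (Suc k) \<in> U" "(y, vs (Suc k), zs 1) \<in> T" using P y by auto
    have "zs 1 \<in> X" using P0 TX by auto
    have P': "\<forall>i<k. vs (k - i) \<in> U \<and> (zs (Suc i), vs (k - i), zs (Suc (Suc i))) \<in> T"
    proof (intro allI impI)
      fix i assume "i < k"
      thus "vs (k - i) \<in> U \<and> (zs (Suc i), vs (k - i), zs (Suc (Suc i))) \<in> T"
        using P[rule_format, of "Suc i"] by simp
    qed
    have D': "\<forall>i\<le>k. dist (H (xs i)) (H ((\<lambda>j. zs (Suc j)) (k - i))) \<le> \<delta>"
    proof (intro allI impI)
      fix i assume "i \<le> k"
      hence "Suc k - i = Suc (k - i)" by simp
      thus "dist (H (xs i)) (H ((\<lambda>j. zs (Suc j)) (k - i))) \<le> \<delta>"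
        using D[rule_format, of i] \<open>i \<le> k\<close> by simp
    qed
    have "zs 1 \<in> qs k" unfolding IH
      using \<open>zs 1 \<in> X\<close> P' D' by (intro CollectI conjI exI[of _ "\<lambda>j. zs (Suc j)"] exI[of _ vs]) auto
    moreover have "dist (H (xs (Suc k))) (H y) \<le> \<delta>" using D[rule_format, of "Suc k"] y by simp
    ultimately show "y \<in> qs (Suc k)" unfolding q using P0 y
      by (auto simp: Pre_set_def Pre_state_def)
  qed
qed

theorem mainTheorem1:
  fixes X X0 XS :: "'x set" and U :: "'u set" and T :: "('x \<times> 'u \<times> 'x) set"
    and H :: "'x \<Rightarrow> 'y::metric_space" and \<delta> :: real
    and n :: nat and xs :: "nat \<Rightarrow> 'x" and qs :: "nat \<Rightarrow> 'x set" and us :: "nat \<Rightarrow> 'u"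
  assumes sys: "is_system X X0 XS U T H"
    and delta: "\<delta> \<ge> 0"
    and start: "(xs 0, qs 0) \<in> est_init X H \<delta>"
    and run: "\<forall>i<n. est_trans X U T H \<delta> (xs i, qs i) (us (Suc i)) (xs (Suc i), qs (Suc i))"
  shows "(\<forall>i<n. (xs (Suc i), us (Suc i), xs i) \<in> T)
       \<and> qs n = {x0' \<in> X. \<exists>xs' :: nat \<Rightarrow> 'x. \<exists>us' :: nat \<Rightarrow> 'u.
                    xs' 0 = x0'
                  \<and> (\<forall>i<n. us' (n - i) \<in> U \<and> (xs' i, us' (n - i), xs' (Suc i)) \<in> T)
                  \<and> (\<forall>i\<le>n. dist (H (xs i)) (H (xs' (n - i))) \<le> \<delta>)}"
proof
  show "\<forall>i<n. (xs (Suc i), us (Suc i), xs i) \<in> T"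
    using run by (auto simp: est_trans_def)
  have TX: "T \<subseteq> X \<times> U \<times> X" using sys by (simp add: is_system_def)
  show "qs n = {x0' \<in> X. \<exists>xs' :: nat \<Rightarrow> 'x. \<exists>us' :: nat \<Rightarrow> 'u.
                    xs' 0 = x0'
                  \<and> (\<forall>i<n. us' (n - i) \<in> U \<and> (xs' i, us' (n - i), xs' (Suc i)) \<in> T)
                  \<and> (\<forall>i\<le>n. dist (H (xs i)) (H (xs' (n - i))) \<le> \<delta>)}" using est_set_char[OF TX start run, of n] by simp
qed

end
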